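(* Fix an iteration index $t$ and an agent $p$. Let $w^{t+1},\lambda^t_p,z^t_p\in\mathbb{R}^{J\times K}$, $\rho^t>0$ and $\delta^t>0$ be given and independent of the data. For a dataset $\mathcal{D}$ and $\xi\in\mathbb{R}^{J\times K}$ put $$G^t(z;\mathcal{D},\xi)=\langle f'_p(z^t_p;\mathcal{D}),z\rangle+\tfrac{\rho^t}{2}\big\|w^{t+1}-z+\tfrac{1}{\rho^t}(\lambda^t_p-\xi)\big\|^2,$$ and let $$z^{t+1}_p(\mathcal{D})=\operatorname{argmin}_{z\in\mathcal{W}\cap\widehat{\mathcal{W}}^t_p}\ G^t(z;\mathcal{D},\tilde\xi^t_p),\qquad \widehat{\mathcal{W}}^t_p=\{z\in\mathbb{R}^{J\times K}:\|z-z^t_p\|\le\delta^t\},$$ where $\tilde\xi^t_p$ has i.i.d. Laplace entries with mean $0$ and scale $\bar\Delta^t_p/\bar\epsilon$ (joint density proportional to $\exp(-\bar\epsilon\|\tilde\xi^t_p\|_1/\bar\Delta^t_p)$), with $\bar\epsilon>0$ and $\bar\Delta^t_p=\max_{\mathcal{D}'_p\in\widehat{\mathcal{D}}_p}\|f'_p(z^t_p;\mathcal{D}_p)-f'_p(z^t_p;\mathcal{D}'_p)\|_1$, the same noise distribution being used for $\mathcal{D}_p$ and its neighbours. Then for all measurable $\mathcal{S}\subset\mathbb{R}^{J\times K}$ and all $\mathcal{D}'_p\in\widehat{\mathcal{D}}_p$, $$e^{-\bar\epsilon}\,\mathbb{P}(z^{t+1}_p(\mathcal{D}'_p)\in\mathcal{S})\le\mathbb{P}(z^{t+1}_p(\mathcal{D}_p)\in\mathcal{S})\le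 e^{\bar\epsilon}\,\mathbb{P}(z^{t+1}_p(\mathcal{D}'_p)\in\mathcal{S}).$$
   Context: Setting: $P,J,K$ positive integers; $\mathbb{R}^{J\times K}$ carries the Frobenius inner product and norm $\|\cdot\|$; $\|\cdot\|_1$ is the entrywise $\ell_1$-norm. Agent $p$ holds $\mathcal{D}_p=\{(x_{pi},y_{pi})\}_{i=1}^{I_p}$, $x_{pi}\in\mathbb{R}^J$, $y_{pi}\in\mathbb{R}^K$, $I=\sum_pI_p$. With a convex loss $\varphi(\cdot;x,y)$ and convex regularizer $r$ on $\mathbb{R}^{J\times K}$ and $\beta>0$, $f_p(z;\mathcal{D}_p)=\frac1I\sum_{i=1}^{I_p}\varphi(z;x_{pi},y_{pi})+\frac\beta Pr(z)$, and $f'_p(z;\mathcal{D})$ is a fixed subgradient of $f_p(\cdot;\mathcal{D})$ at $z$. $\mathcal{W}\subset\mathbb{R}^{J\times K}$ is compact convex, and $\mathcal{W}\cap\widehat{\mathcal{W}}^t_p=\{z:h^t_m(z)\le0,\ m\in[M]\}$ with each $h^t_m$ convex and twice continuously differentiable. $\widehat{\mathcal{D}}_p$ is the collection of datasets differing from $\mathcal{D}_p$ in a single entry. *)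

theory Defs
  imports "HOL-Probability.Probability"
begin

text \<open>Matrices in R^(J x K) are modelled as real^'k^'j (rows indexed by 'j).
  The HOL-Analysis inner product / norm on this type are the Frobenius ones.\<close>

definition l1norm :: "real^'k^'j \<Rightarrow> real" where
  "l1norm A = (\<Sum>i\<in>UNIV. \<Sum>k\<in>UNIV. \<bar>A $ i $ k\<bar>)"

definition local_obj ::
  "nat \<Rightarrow> nat \<Rightarrow> real \<Rightarrow> (real^'k^'j \<Rightarrow> real^'j \<Rightarrow> real^'k \<Rightarrow> real)
   \<Rightarrow> (real^'k^'j \<Rightarrow> real) \<Rightarrow> ((real^'j) \<times> (real^'k)) list \<Rightarrow> real^'k^'j \<Rightarrow> real" where
  "local_obj I P \<beta> \<phi> r D z =
     (1 / real I) * sum_list (map (\<lambda>(x, y). \<phi> z x y) D) + \<beta> / real P * r z"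

definition is_subgradient :: "('a::real_inner \<Rightarrow> real) \<Rightarrow> 'a \<Rightarrow> 'a \<Rightarrow> bool" where
  "is_subgradient f z g \<longleftrightarrow> (\<forall>u. f z + inner g (u - z) \<le> f u)"

definition neighbours :: "'a list \<Rightarrow> 'a list set" where
  "neighbours D = {D[i := e] | i e. i < length D} - {D}"

definition twice_cont_diff :: "('a::euclidean_space \<Rightarrow> real) \<Rightarrow> bool" where
  "twice_cont_diff f \<longleftrightarrow>
     (\<exists>(D1 :: 'a \<Rightarrow> 'a \<Rightarrow>\<^sub>L real) (D2 :: 'a \<Rightarrow> 'a \<Rightarrow>\<^sub>L ('a \<Rightarrow>\<^sub>L real)).
        (\<forall>x. (f has_derivative blinfun_apply (D1 x)) (at x)) \<and>
        (\<forall>x. (D1 has_derivative blinfun_apply (D2 x)) (at x)) \<and>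
        continuous_on UNIV D2)"

text \<open>Distribution of a J x K matrix with i.i.d. Laplace(0, b) entries:
  joint density (1/(2b))^(JK) exp(-||xi||_1 / b). For b = 0 (degenerate scale)
  the noise is identically 0.\<close>
definition laplace_noise :: "real \<Rightarrow> (real^'k^'j) measure" where
  "laplace_noise b =
     (if 0 < b then
        density lborel (\<lambda>\<xi>. ennreal ((1 / (2 * b)) ^ (CARD('j) * CARD('k))
                                       * exp (- l1norm \<xi> / b)))
      else return borel 0)"

definition argmin_on :: "'a set \<Rightarrow> ('a \<Rightarrow> real) \<Rightarrow> 'a" where
  "argmin_on C G = (THE z. z \<in> C \<and> (\<forall>u\<in>C. G z \<le> G u))"

definition G_obj :: "real^'k^'j \<Rightarrow> real \<Rightarrow> real^'k^'j \<Rightarrow> real^'k^'j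
   \<Rightarrow> real^'k^'j \<Rightarrow> real^'k^'j \<Rightarrow> real" where
  "G_obj g \<rho> w lam \<xi> z = inner g z + \<rho> / 2 * (norm (w - z + (1 / \<rho>) *\<^sub>R (lam - \<xi>)))\<^sup>2"

end

theory Submission imports Defs begin

lemma G_expand:
  assumes "\<rho> \<noteq> 0"
  shows "G_obj g \<rho> w lam \<xi> z = inner (g + \<xi>) z - \<rho> * inner w z - inner lam z + \<rho>/2 * (norm z)\<^sup>2
     + \<rho>/2 * (norm (w + (1/\<rho>) *\<^sub>R (lam - \<xi>)))\<^sup>2"
proof -
  define a where "a = w + (1/\<rho>) *\<^sub>R (lam - \<xi>)"
  have e: "w - z + (1/\<rho>) *\<^sub>R (lam - \<xi>) = a - z" unfolding a_def by (simp add: algebra_simps)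
  have n: "(norm (a - z))\<^sup>2 = (norm a)\<^sup>2 - 2 * inner a z + (norm z)\<^sup>2"
    by (simp add: power2_norm_eq_inner inner_diff inner_commute)
  have i: "\<rho> * inner a z = \<rho> * inner w z + inner lam z - inner \<xi> z"
    unfolding a_def using assms by (simp add: inner_add inner_diff algebra_simps)
  show ?thesis unfolding G_obj_def e n a_def[symmetric]
    using i by (simp add: inner_add algebra_simps)
qed

lemma argmin_const:
  assumes "\<And>z. G1 z = G2 z + c"
  shows "argmin_on C G1 = argmin_on C G2"
  unfolding argmin_on_def using assms by simp

lemma zn_shift:
  assumes "\<rho> \<noteq> 0"
  shows "argmin_on C (G_obj g \<rho> w lam \<xi>) = argmin_on C (G_obj g' \<rho> w lam (\<xi> + (g - g')))"
  apply (rule argmin_const[where c = "\<rho>/2 * (norm (w + (1/\<rho>) *\<^sub>R (lam - \<xi>)))\<^sup>2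
     - \<rho>/2 * (norm (w + (1/\<rho>) *\<^sub>R (lam - (\<xi> + (g - g')))))\<^sup>2"])
  unfolding G_expand[OF assms] by (simp add: algebra_simps)

lemma l1_tri: "l1norm (x - u) \<ge> l1norm x - l1norm (u::real^'k^'j)"
proof -
  have "\<bar>x $ i $ k\<bar> \<le> \<bar>(x - u) $ i $ k\<bar> + \<bar>u $ i $ k\<bar>" for i k by simp
  hence "l1norm x \<le> (\<Sum>i\<in>UNIV. \<Sum>k\<in>UNIV. \<bar>(x - u) $ i $ k\<bar> + \<bar>u $ i $ k\<bar>)"
    unfolding l1norm_def by (intro sum_mono) auto
  thus ?thesis unfolding l1norm_def sum.distrib by simp
qed

lemma l1_uminus: "l1norm (- u) = l1norm (u::real^'k^'j)"
  unfolding l1norm_def by simp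

lemma l1_nonneg: "0 \<le> l1norm (u::real^'k^'j)"
  unfolding l1norm_def by (intro sum_nonneg) auto

lemma l1_zero: "l1norm (u::real^'k^'j) = 0 \<Longrightarrow> u = 0"
  unfolding l1norm_def
  by (subst (asm) sum_nonneg_eq_0_iff; auto simp: sum_nonneg_eq_0_iff vec_eq_iff)

lemma ennreal_transfer:
  fixes a b :: ennreal and c :: real
  assumes "a \<le> ennreal c * b" "b \<le> ennreal c * a" "0 \<le> c"
  shows "enn2real a \<le> c * enn2real b"
proof (cases "b = top")
  case True
  hence "a = top" using assms(2) by (auto simp: ennreal_mult_eq_top_iff top_unique)
  thus ?thesis using True by simp
next
  case False
  have "enn2real a \<le> enn2real (ennreal c * b)"
    using assms False by (intro enn2real_mono) (auto simp: ennreal_mult_eq_top_iff top.not_eq_extremum[symmetric] ennreal_mult_less_top)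
  thus ?thesis using assms by (simp add: enn2real_mult)
qed


lemma l1_meas: "l1norm \<in> borel_measurable (borel :: (real^'k^'j) measure)"
proof -
  have "continuous_on UNIV (l1norm :: real^'k^'j \<Rightarrow> real)"
    unfolding l1norm_def[abs_def] by (intro continuous_intros)
  thus ?thesis by (rule borel_measurable_continuous_onI)
qed

lemma shift_bound:
  fixes v :: "real^'k^'j" and A :: "(real^'k^'j) set"
  assumes b: "0 < b" and lv: "l1norm v \<le> \<epsilon> * b"
  shows "emeasure (laplace_noise b) {x. x + v \<in> A} \<le> ennreal (exp \<epsilon>) * emeasure (laplace_noise b) A"
proof -
  define K where "K = (1 / (2 * b)) ^ (CARD('j) * CARD('k))"
  define f where "f = (\<lambda>\<xi>::real^'k^'j. ennreal (K * exp (- l1norm \<xi> / b)))"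
  have L: "laplace_noise b = density lborel f" unfolding laplace_noise_def f_def K_def using b by simp
  have fm: "f \<in> borel_measurable lborel" unfolding f_def using l1_meas by measurable
  have K0: "0 \<le> K" unfolding K_def using b by simp
  have pt: "f (y - v) \<le> ennreal (exp \<epsilon>) * f y" for y
  proof -
    have "- l1norm (y - v) / b \<le> - l1norm y / b + \<epsilon>"
    proof -
      have hh: "- l1norm (y - v) \<le> - l1norm y + \<epsilon> * b" using l1_tri[of y v] lv by linarith
      have "- l1norm (y - v) / b \<le> (- l1norm y + \<epsilon> * b) / b" using divide_right_mono[OF hh, of b] b by simp
      also have "\<dots> = - l1norm y / b + \<epsilon>" using b by (simp add: field_simps)
      finally show ?thesis .
    qed
    hence "K * exp (- l1norm (y - v) / b) \<le> exp \<epsilon> * (K * exp (- l1norm y / b))"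
      using K0 by (simp add: mult_left_mono exp_add[symmetric] mult.commute mult.left_commute)
    thus ?thesis unfolding f_def using K0 by (simp add: ennreal_mult[symmetric] ennreal_leI)
  qed
  show ?thesis
  proof (cases "A \<in> sets borel")
    case True
    have Bm: "{x. x + v \<in> A} \<in> sets lborel"
    proof -
      have "(\<lambda>x::real^'k^'j. x + v) -` A \<in> sets borel"
        by (rule measurable_sets_borel[OF _ True]) simp
      thus ?thesis by (simp add: vimage_def)
    qed
    have "emeasure (laplace_noise b) {x. x + v \<in> A} = (\<integral>\<^sup>+x. f x * indicator {x. x + v \<in> A} x \<partial>lborel)"
      unfolding L using Bm fm by (simp add: emeasure_density)
    also have "\<dots> = (\<integral>\<^sup>+x. f ((v + x) - v) * indicator A (v + x) \<partial>lborel)"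
      by (intro nn_integral_cong) (auto simp: indicator_def add.commute)
    also have "\<dots> = (\<integral>\<^sup>+y. f (y - v) * indicator A y \<partial>distr lborel borel ((+) v))"
      using True fm by (subst nn_integral_distr) auto
    also have "\<dots> = (\<integral>\<^sup>+y. f (y - v) * indicator A y \<partial>lborel)"
      by (simp add: lborel_distr_plus)
    also have "\<dots> \<le> (\<integral>\<^sup>+y. ennreal (exp \<epsilon>) * (f y * indicator A y) \<partial>lborel)"
      using pt by (intro nn_integral_mono) (auto simp: indicator_def)
    also have "\<dots> = ennreal (exp \<epsilon>) * (\<integral>\<^sup>+y. f y * indicator A y \<partial>lborel)"
      using True fm by (subst nn_integral_cmult) auto
    also have "\<dots> = ennreal (exp \<epsilon>) * emeasure (laplace_noise b) A"
      unfolding L using True fm by (simp add: emeasure_density)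
    finally show ?thesis .
  next
    case False
    have "{x. x + v \<in> A} \<notin> sets (laplace_noise b)"
    proof
      assume "{x. x + v \<in> A} \<in> sets (laplace_noise b)"
      hence Bb: "{x. x + v \<in> A} \<in> sets borel" unfolding L by simp
      have "(\<lambda>x::real^'k^'j. x - v) -` {x. x + v \<in> A} \<in> sets borel"
        by (rule measurable_sets_borel[OF _ Bb]) simp
      moreover have "(\<lambda>x::real^'k^'j. x - v) -` {x. x + v \<in> A} = A" by auto
      ultimately show False using False by simp
    qed
    thus ?thesis by (simp add: emeasure_notin_sets)
  qed
qed


lemma final_ineq:
  fixes \<mu> :: "'a measure" and A B :: "'a set"
  assumes "emeasure \<mu> B \<le> ennreal (exp \<epsilon>) * emeasure \<mu> A"
    and "emeasure \<mu> A \<le> ennreal (exp \<epsilon>) * emeasure \<mu> B"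
  shows "exp (- \<epsilon>) * measure \<mu> A \<le> measure \<mu> B \<and> measure \<mu> B \<le> exp \<epsilon> * measure \<mu> A"
proof -
  have 1: "measure \<mu> B \<le> exp \<epsilon> * measure \<mu> A"
    unfolding measure_def by (rule ennreal_transfer[OF assms]) simp
  have 2: "measure \<mu> A \<le> exp \<epsilon> * measure \<mu> B"
    unfolding measure_def by (rule ennreal_transfer[OF assms(2,1)]) simp
  have "exp (- \<epsilon>) * measure \<mu> A \<le> exp (- \<epsilon>) * (exp \<epsilon> * measure \<mu> B)"
    using 2 by (intro mult_left_mono) auto
  also have "\<dots> = measure \<mu> B" by (simp add: exp_minus field_simps)
  finally show ?thesis using 1 by simp
qed

theorem theorem3:
  fixes P :: nat and p :: nat
    and Ds :: "nat \<Rightarrow> ((real^'j) \<times> (real^'k)) list"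
    and \<phi> :: "real^'k^'j \<Rightarrow> real^'j \<Rightarrow> real^'k \<Rightarrow> real"
    and r :: "real^'k^'j \<Rightarrow> real"
    and \<beta> :: real
    and fsub :: "((real^'j) \<times> (real^'k)) list \<Rightarrow> real^'k^'j \<Rightarrow> real^'k^'j"
    and W :: "(real^'k^'j) set"
    and M :: nat and h :: "nat \<Rightarrow> real^'k^'j \<Rightarrow> real"
    and w_next lam_t z_t :: "real^'k^'j"
    and \<rho> \<delta> \<epsilon> \<Delta> :: real
  assumes P_pos: "0 < P" and p_lt: "p < P"
    and I_pos: "0 < (\<Sum>q<P. length (Ds q))"
    and \<phi>_convex: "\<And>x y. convex_on UNIV (\<lambda>z. \<phi> z x y)"
    and r_convex: "convex_on UNIV r"
    and \<beta>_pos: "0 < \<beta>"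
    and fsub: "\<And>D z. is_subgradient
                 (local_obj (\<Sum>q<P. length (Ds q)) P \<beta> \<phi> r D) z (fsub D z)"
    and W_compact: "compact W" and W_convex: "convex W"
    and h_convex: "\<And>m. m < M \<Longrightarrow> convex_on UNIV (h m)"
    and h_C2: "\<And>m. m < M \<Longrightarrow> twice_cont_diff (h m)"
    and h_repr: "W \<inter> cball z_t \<delta> = {z. \<forall>m<M. h m z \<le> 0}"
    and \<rho>_pos: "0 < \<rho>" and \<delta>_pos: "0 < \<delta>" and \<epsilon>_pos: "0 < \<epsilon>"
    and \<Delta>_max_exists: "\<exists>D0\<in>neighbours (Ds p). \<forall>D'\<in>neighbours (Ds p).
            l1norm (fsub (Ds p) z_t - fsub D' z_t) \<le> l1norm (fsub (Ds p) z_t - fsub D0 z_t)"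
    and \<Delta>_def: "\<Delta> = (SUP D'\<in>neighbours (Ds p). l1norm (fsub (Ds p) z_t - fsub D' z_t))"
  shows "\<forall>S \<in> sets borel. \<forall>D' \<in> neighbours (Ds p).
     (let zn = (\<lambda>D \<xi>. argmin_on (W \<inter> cball z_t \<delta>) (G_obj (fsub D z_t) \<rho> w_next lam_t \<xi>));
          Pr = (\<lambda>D. measure (laplace_noise (\<Delta> / \<epsilon>))
                     {\<xi> \<in> space (laplace_noise (\<Delta> / \<epsilon>)). zn D \<xi> \<in> S})
      in exp (- \<epsilon>) * Pr D' \<le> Pr (Ds p) \<and> Pr (Ds p) \<le> exp \<epsilon> * Pr D')"
proof (intro ballI)
  fix S :: "(real^'k^'j) set" and D'
  assume D': "D' \<in> neighbours (Ds p)"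
  define C where "C = W \<inter> cball z_t \<delta>"
  define zn where "zn = (\<lambda>D \<xi>. argmin_on C (G_obj (fsub D z_t) \<rho> w_next lam_t \<xi>))"
  define b where "b = \<Delta> / \<epsilon>"
  define \<mu> where "\<mu> = (laplace_noise b :: (real^'k^'j) measure)"
  define v where "v = fsub (Ds p) z_t - fsub D' z_t"
  define A where "A = {\<xi>. zn D' \<xi> \<in> S}"
  define B where "B = {\<xi>. \<xi> + v \<in> A}"
  let ?F = "\<lambda>D'. l1norm (fsub (Ds p) z_t - fsub D' z_t)"
  obtain D0 where D0: "D0 \<in> neighbours (Ds p)" "\<And>D'. D' \<in> neighbours (Ds p) \<Longrightarrow> ?F D' \<le> ?F D0"
    using \<Delta>_max_exists by blast
  have \<Delta>eq: "\<Delta> = ?F D0" unfolding \<Delta>_def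
    by (rule cSup_eq_maximum) (use D0 in auto)
  have lv: "l1norm v \<le> \<Delta>" unfolding \<Delta>eq v_def using D0(2)[OF D'] .
  have \<Delta>0: "0 \<le> \<Delta>" using lv l1_nonneg[of v] by linarith
  have spc: "space \<mu> = UNIV" unfolding \<mu>_def laplace_noise_def by simp
  have znsh: "zn (Ds p) \<xi> = zn D' (\<xi> + v)" for \<xi>
    unfolding zn_def v_def using zn_shift[of \<rho>] \<rho>_pos by simp
  have PrD: "{\<xi> \<in> space \<mu>. zn (Ds p) \<xi> \<in> S} = B" unfolding spc B_def A_def znsh by simp
  have PrD': "{\<xi> \<in> space \<mu>. zn D' \<xi> \<in> S} = A" unfolding spc A_def by simp
  have main: "exp (- \<epsilon>) * measure \<mu> A \<le> measure \<mu> B \<and> measure \<mu> B \<le> exp \<epsilon> * measure \<mu> A"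
  proof (cases "\<Delta> = 0")
    case True
    hence "v = 0" using lv l1_nonneg[of v] l1_zero[of v] by linarith
    hence "B = A" unfolding B_def by simp
    moreover have "exp (- \<epsilon>) * measure \<mu> A \<le> 1 * measure \<mu> A"
      using \<epsilon>_pos by (intro mult_right_mono) auto
    moreover have "1 * measure \<mu> A \<le> exp \<epsilon> * measure \<mu> A"
      using \<epsilon>_pos by (intro mult_right_mono) auto
    ultimately show ?thesis by simp
  next
    case False
    hence b0: "0 < b" unfolding b_def using \<Delta>0 \<epsilon>_pos by simp
    have lvb: "l1norm v \<le> \<epsilon> * b" "l1norm (- v) \<le> \<epsilon> * b"
      using lv \<epsilon>_pos unfolding b_def l1_uminus by simp_all
    have e1: "emeasure \<mu> B \<le> ennreal (exp \<epsilon>) * emeasure \<mu> A"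
      unfolding \<mu>_def B_def by (rule shift_bound[OF b0 lvb(1)])
    have "emeasure \<mu> {x. x + - v \<in> B} \<le> ennreal (exp \<epsilon>) * emeasure \<mu> B"
      unfolding \<mu>_def by (rule shift_bound[OF b0 lvb(2)])
    moreover have "{x. x + - v \<in> B} = A" unfolding B_def by simp
    ultimately have e2: "emeasure \<mu> A \<le> ennreal (exp \<epsilon>) * emeasure \<mu> B" by simp
    show ?thesis by (rule final_ineq[OF e1 e2])
  qed
  show "let zn = (\<lambda>D \<xi>. argmin_on (W \<inter> cball z_t \<delta>) (G_obj (fsub D z_t) \<rho> w_next lam_t \<xi>));
          Pr = (\<lambda>D. measure (laplace_noise (\<Delta> / \<epsilon>))
                     {\<xi> \<in> space (laplace_noise (\<Delta> / \<epsilon>)). zn D \<xi> \<in> S})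
      in exp (- \<epsilon>) * Pr D' \<le> Pr (Ds p) \<and> Pr (Ds p) \<le> exp \<epsilon> * Pr D'"
    unfolding Let_def C_def[symmetric] zn_def[symmetric] b_def[symmetric] \<mu>_def[symmetric] PrD PrD'
    by (rule main)
qed

end
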